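(* Let $p$ be a probability distribution on the (finite) set of trajectories. Suppose there exists a policy $\pi^\circ \in \Pi$ whose trajectory distribution satisfies $$\pi^\circ(\tau) = \frac{\sqrt{p(\tau)}}{\sum_{\tau'} \sqrt{p(\tau')}} \quad \text{for all trajectories } \tau.$$ Then there exists a (time-indexed) reward function $r = (r_t)_{t=1}^T$, $r_t : \mathcal{S}\times\mathcal{A} \to [-\infty,\infty)$, such that the meta-POMDP and the MaxEnt RL problem for $r$ have the same solutions: $$\arg\min_{\pi \in \Pi} \mathrm{Regret}_p(\pi) = \arg\max_{\pi\in\Pi} J(\pi, r).$$
   Context: Finite-horizon MDP: finite state set $\mathcal{S}$, finite action set $\mathcal{A}$, horizon $T\ge 1$, initial distribution $p_1$ on $\mathcal{S}$, transition kernel $p(s'\mid s,a)$. A trajectory is $\tau=(s_1,a_1,\dots,s_T,a_T)$. A policy is a Markov (possibly time-dependent) policy $\pi=(\pi_t(\cdot\mid s))_{t=1}^T$, each $\pi_t(\cdot\mid s)$ a probability distribution on $\mathcal{A}$; we write $\pi(a_t\mid s_t)$ for $\pi_t(a_t\mid s_t)$, and $\Pi$ denotes the set of all such policies. The trajectory distribution of $\pi$ is $\pi(\tau)=p_1(s_1)\prod_{t=1}^{T}\pi(a_t\mid s_t)\prod_{t=1}^{T-1}p(s_{t+1}\mid s_t,a_t)$, and $\mathbb{E}_\pi$ denotes expectation over $\tau\sim\pi(\tau)$. For a (possibly time-indexed) reward $r_t(s,a)$ (values in $[-\infty,\infty)$ allowed), the MaxEnt RL objective is $J(\pi,r)=\mathbb{E}_\pi\big[\sum_{t=1}^T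 r_t(s_t,a_t)\big]+\mathcal{H}_\pi[a\mid s]$, where $\mathcal{H}_\pi[a\mid s]=\mathbb{E}_\pi\big[-\sum_{t=1}^T\log\pi(a_t\mid s_t)\big]$ (with $0\log 0=0$); the MaxEnt RL problem is to maximize $J(\cdot,r)$ over $\Pi$. Meta-POMDP: given a target distribution $p$ over trajectories (a belief over an unobserved target trajectory $\tau^*$), the agent repeatedly runs episodes with the same policy until it produces $\tau^*$; its regret is the expected number of episodes, $\mathrm{Regret}_p(\pi)=\sum_{\tau:\,p(\tau)>0} \frac{p(\tau)}{\pi(\tau)}$, with the convention $p(\tau)/0=+\infty$. Solving the meta-POMDP means minimizing $\mathrm{Regret}_p$ over $\Pi$. *)

theory Defs
  imports Complex_Main "HOL-Library.Extended_Real"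
begin

(* Time steps t = 1..T of the paper are indexed 0..T-1 here.
   A trajectory (s_1,a_1,...,s_T,a_T) is a list of length T of state-action pairs,
   tau ! t = (s_{t+1}, a_{t+1}). *)

definition trajs :: "nat \<Rightarrow> ('s \<times> 'a) list set" where
  "trajs T = {tau. length tau = T}"

(* Markov, time-dependent policies: pol t s a = pi_{t+1}(a | s) *)
definition policies :: "nat \<Rightarrow> (nat \<Rightarrow> 's \<Rightarrow> 'a::finite \<Rightarrow> real) set" where
  "policies T = {pol. \<forall>t<T. \<forall>s. (\<forall>a. 0 \<le> pol t s a) \<and> (\<Sum>a\<in>UNIV. pol t s a) = 1}"

definition traj_prob ::
  "nat \<Rightarrow> ('s \<Rightarrow> real) \<Rightarrow> ('s \<Rightarrow> 'a \<Rightarrow> 's \<Rightarrow> real) \<Rightarrow> (nat \<Rightarrow> 's \<Rightarrow> 'a \<Rightarrow> real)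
    \<Rightarrow> ('s \<times> 'a) list \<Rightarrow> real" where
  "traj_prob T p1 P pol tau =
     p1 (fst (tau ! 0))
     * (\<Prod>t<T. pol t (fst (tau ! t)) (snd (tau ! t)))
     * (\<Prod>t<T - 1. P (fst (tau ! t)) (snd (tau ! t)) (fst (tau ! Suc t)))"

definition regret ::
  "nat \<Rightarrow> ('s \<Rightarrow> real) \<Rightarrow> ('s \<Rightarrow> 'a \<Rightarrow> 's \<Rightarrow> real) \<Rightarrow> (('s \<times> 'a) list \<Rightarrow> real)
    \<Rightarrow> (nat \<Rightarrow> 's \<Rightarrow> 'a \<Rightarrow> real) \<Rightarrow> ereal" where
  "regret T p1 P p pol =
     (\<Sum>tau\<in>{tau\<in>trajs T. 0 < p tau}.
        (if traj_prob T p1 P pol tau = 0 then \<infinity>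
         else ereal (p tau / traj_prob T p1 P pol tau)))"

(* conditional entropy H_pi[a|s] = E_pi[- sum_t log pol(a_t|s_t)]; terms with pol(tau)=0 vanish *)
definition cond_entropy ::
  "nat \<Rightarrow> ('s \<Rightarrow> real) \<Rightarrow> ('s \<Rightarrow> 'a \<Rightarrow> 's \<Rightarrow> real) \<Rightarrow> (nat \<Rightarrow> 's \<Rightarrow> 'a \<Rightarrow> real) \<Rightarrow> real" where
  "cond_entropy T p1 P pol =
     (\<Sum>tau\<in>trajs T. traj_prob T p1 P pol tau *
        (- (\<Sum>t<T. ln (pol t (fst (tau ! t)) (snd (tau ! t))))))"

definition maxent_obj ::
  "nat \<Rightarrow> ('s \<Rightarrow> real) \<Rightarrow> ('s \<Rightarrow> 'a \<Rightarrow> 's \<Rightarrow> real) \<Rightarrow> (nat \<Rightarrow> 's \<Rightarrow> 'a \<Rightarrow> real)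
    \<Rightarrow> (nat \<Rightarrow> 's \<Rightarrow> 'a \<Rightarrow> ereal) \<Rightarrow> ereal" where
  "maxent_obj T p1 P pol r =
     (\<Sum>tau\<in>trajs T. ereal (traj_prob T p1 P pol tau) *
        (\<Sum>t<T. r t (fst (tau ! t)) (snd (tau ! t))))
     + ereal (cond_entropy T p1 P pol)"

end

theory Submission
  imports Defs
begin

lemma sum_minf:
  fixes f :: "'x \<Rightarrow> ereal"
  assumes "finite A" "a \<in> A" "f a = -\<infinity>" "\<forall>x\<in>A. f x \<noteq> \<infinity>"
  shows "sum f A = -\<infinity>"
proof -
  have "sum f (A - {a}) \<noteq> \<infinity>" using assms by (subst sum_Pinfty) auto
  moreover have "sum f A = f a + sum f (A - {a})" using assms by (simp add: sum.remove)
  ultimately show ?thesis using assms by simp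
qed

lemma gibbs:
  fixes A :: "'x set" and q c :: "'x \<Rightarrow> real"
  assumes fin: "finite A" and q0: "\<forall>x\<in>A. 0 \<le> q x" and c0: "\<forall>x\<in>A. 0 \<le> c x"
    and qs: "sum q A = 1" and cs: "sum c A = 1"
  shows "sum (\<lambda>x. if q x = 0 then 0 else if c x = 0 then -\<infinity> else ereal (q x * ln (c x / q x))) A \<le> 0
     \<and> (sum (\<lambda>x. if q x = 0 then 0 else if c x = 0 then -\<infinity> else ereal (q x * ln (c x / q x))) A = 0
        \<longleftrightarrow> (\<forall>x\<in>A. q x = c x))"
    (is "?E \<le> 0 \<and> (?E = 0 \<longleftrightarrow> _)")
proof (cases "\<exists>x\<in>A. q x \<noteq> 0 \<and> c x = 0")
  case True
  then obtain a where a: "a \<in> A" "q a \<noteq> 0" "c a = 0" by blast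
  have "?E = -\<infinity>" by (rule sum_minf[OF fin a(1)]) (use a in auto)
  then show ?thesis using a by force
next
  case False
  define g where "g x = (if q x = 0 then 0 else q x * ln (c x / q x))" for x
  have E: "?E = ereal (sum g A)"
    by (subst sum_ereal[symmetric], rule sum.cong) (use False in \<open>auto simp: g_def\<close>)
  have gle: "g x \<le> c x - q x" if "x \<in> A" for x
  proof (cases "q x = 0")
    case True then show ?thesis using c0 that by (simp add: g_def)
  next
    case qn: False
    have qp: "q x > 0" using q0 that qn by force
    have cp: "c x > 0" using c0 that qn False by force
    have "ln (c x / q x) \<le> c x / q x - 1" using ln_le_minus_one qp cp by simp
    then have "q x * ln (c x / q x) \<le> q x * (c x / q x - 1)" using qp by (simp add: mult_left_mono)
    also have "\<dots> = c x - q x" using qp by (simp add: field_simps)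
    finally show ?thesis using qn by (simp add: g_def)
  qed
  have d: "sum (\<lambda>x. c x - q x - g x) A = - sum g A"
    using qs cs by (simp add: sum_subtractf)
  have dn: "\<forall>x\<in>A. 0 \<le> c x - q x - g x" using gle by auto
  have "0 \<le> sum (\<lambda>x. c x - q x - g x) A" using dn by (simp add: sum_nonneg)
  then have le: "sum g A \<le> 0" using d by simp
  have eq: "sum g A = 0 \<longleftrightarrow> (\<forall>x\<in>A. q x = c x)"
  proof
    assume "sum g A = 0"
    then have "\<forall>x\<in>A. c x - q x - g x = 0" using d dn sum_nonneg_eq_0_iff[OF fin, of "\<lambda>x. c x - q x - g x"] by simp
    show "\<forall>x\<in>A. q x = c x"
    proof
      fix x assume x: "x \<in> A"
      then have z: "c x - q x - g x = 0" using \<open>\<forall>x\<in>A. c x - q x - g x = 0\<close> by blast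
      show "q x = c x"
      proof (cases "q x = 0")
        case True then show ?thesis using z by (simp add: g_def)
      next
        case qn: False
        have qp: "q x > 0" using q0 x qn by force
        have cp: "c x > 0" using c0 x qn False by force
        have w: "q x * (c x / q x - 1) = c x - q x" using qp by (simp add: field_simps)
        have "q x * ln (c x / q x) = q x * (c x / q x - 1)" using z qn w by (simp add: g_def)
        then have "ln (c x / q x) = c x / q x - 1" using qp by simp
        then have "c x / q x = 1" using ln_eq_minus_one[of "c x / q x"] cp qp by (metis divide_pos_pos)
        then show ?thesis using qp by (simp add: field_simps)
      qed
    qed
  next
    assume "\<forall>x\<in>A. q x = c x"
    then have "\<forall>x\<in>A. g x = 0" by (auto simp: g_def)
    then show "sum g A = 0" by simp
  qed
  show ?thesis using E le eq by simp
qed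

lemma regret_abs:
  fixes A :: "'x set" and q p :: "'x \<Rightarrow> real"
  assumes fin: "finite A" and q0: "\<forall>x\<in>A. 0 \<le> q x" and p0: "\<forall>x\<in>A. 0 \<le> p x"
    and qs: "sum q A = 1" and ps: "sum p A = 1"
  shows "ereal ((sum (\<lambda>x. sqrt (p x)) A)^2) \<le> sum (\<lambda>x. if q x = 0 then \<infinity> else ereal (p x / q x)) {x\<in>A. 0 < p x}
     \<and> (sum (\<lambda>x. if q x = 0 then \<infinity> else ereal (p x / q x)) {x\<in>A. 0 < p x} = ereal ((sum (\<lambda>x. sqrt (p x)) A)^2)
        \<longleftrightarrow> (\<forall>x\<in>A. q x = sqrt (p x) / sum (\<lambda>x. sqrt (p x)) A))"
    (is "ereal (?S^2) \<le> ?R \<and> (?R = _ \<longleftrightarrow> _)")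
proof -
  define S where "S = ?S"
  define B where "B = {x\<in>A. 0 < p x}"
  have finB: "finite B" using fin by (simp add: B_def)
  have BA: "B \<subseteq> A" by (auto simp: B_def)
  have Spos: "S > 0"
  proof (rule ccontr)
    assume "\<not> S > 0"
    moreover have "S \<ge> 0" unfolding S_def using p0 by (intro sum_nonneg) simp
    ultimately have "S = 0" by simp
    then have "\<forall>x\<in>A. sqrt (p x) = 0" using sum_nonneg_eq_0_iff[OF fin, of "\<lambda>x. sqrt (p x)"] S_def p0 by simp
    then have "\<forall>x\<in>A. p x = 0" by simp
    then have "sum p A = 0" by simp
    then show False using ps by simp
  qed
  have SB: "sum (\<lambda>x. sqrt (p x)) B = S"
    unfolding S_def by (rule sum.mono_neutral_left[OF fin BA]) (use p0 in \<open>auto simp: B_def\<close>)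
  show ?thesis
  proof (cases "\<exists>x\<in>B. q x = 0")
    case True
    then obtain a where a: "a \<in> B" "q a = 0" by blast
    have R: "?R = \<infinity>" unfolding B_def[symmetric] using finB a by (subst sum_Pinfty) force
    have "sqrt (p a) / S > 0" using a Spos by (simp add: B_def)
    then have "\<not> (\<forall>x\<in>A. q x = sqrt (p x) / S)" using a BA by force
    then show ?thesis using R S_def by simp
  next
    case False
    have qp: "\<forall>x\<in>B. q x > 0" using False q0 BA by force
    define h where "h x = (sqrt (p x) - S * q x)^2 / q x" for x
    have pq: "p x / q x = h x + 2 * S * sqrt (p x) - S^2 * q x" if "x \<in> B" for x
    proof -
      have "q x > 0" using qp that by blast
      moreover have "sqrt (p x) ^ 2 = p x" using p0 BA that by auto
      ultimately show ?thesis unfolding h_def by (simp add: field_simps power2_eq_square)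
    qed
    have R: "?R = ereal (sum (\<lambda>x. p x / q x) B)"
      unfolding B_def[symmetric] by (subst sum_ereal[symmetric], rule sum.cong) (use False in auto)
    have sumpq: "sum (\<lambda>x. p x / q x) B - S^2 = sum h B + S^2 * (1 - sum q B)"
    proof -
      have "sum (\<lambda>x. p x / q x) B = sum (\<lambda>x. h x + 2 * S * sqrt (p x) - S^2 * q x) B"
        using pq by (rule sum.cong[OF refl])
      also have "\<dots> = sum h B + 2 * S * S - S^2 * sum q B"
        by (simp add: sum.distrib sum_subtractf sum_distrib_left[symmetric] SB)
      finally show ?thesis by (simp add: algebra_simps power2_eq_square)
    qed
    have hn: "\<forall>x\<in>B. 0 \<le> h x" unfolding h_def using qp by auto
    have h0: "0 \<le> sum h B" using hn by (simp add: sum_nonneg)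
    have qB: "sum q B \<le> 1" using qs sum_mono2[OF fin BA, of q] q0 by auto
    have t0: "0 \<le> S^2 * (1 - sum q B)" using qB by simp
    have ge: "S^2 \<le> sum (\<lambda>x. p x / q x) B" using sumpq h0 t0 by linarith
    have eq: "sum (\<lambda>x. p x / q x) B = S^2 \<longleftrightarrow> (\<forall>x\<in>A. q x = sqrt (p x) / S)"
    proof
      assume "sum (\<lambda>x. p x / q x) B = S^2"
      then have z1: "sum h B = 0" and z2: "S^2 * (1 - sum q B) = 0" using sumpq h0 t0 by linarith+
      have hz: "\<forall>x\<in>B. h x = 0" using z1 sum_nonneg_eq_0_iff[OF finB, of h] hn by auto
      have qB1: "sum q B = 1" using z2 Spos by simp
      have "sum q A = sum q B + sum q (A - B)" using fin BA by (simp add: sum.subset_diff)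
      then have "sum q (A - B) = 0" using qs qB1 by simp
      then have qz: "\<forall>x\<in>A - B. q x = 0" using sum_nonneg_eq_0_iff[of "A - B" q] fin q0 by auto
      show "\<forall>x\<in>A. q x = sqrt (p x) / S"
      proof
        fix x assume x: "x \<in> A"
        show "q x = sqrt (p x) / S"
        proof (cases "x \<in> B")
          case True
          then have "(sqrt (p x) - S * q x)^2 / q x = 0" using hz h_def by simp
          moreover have "q x > 0" using qp True by blast
          ultimately have "sqrt (p x) - S * q x = 0" by simp
          then show ?thesis using Spos by (simp add: field_simps)
        next
          case False
          then have "p x = 0" using x p0 by (force simp: B_def)
          then show ?thesis using qz x False by simp
        qed
      qed
    next
      assume a: "\<forall>x\<in>A. q x = sqrt (p x) / S"
      have "sum (\<lambda>x. p x / q x) B = sum (\<lambda>x. S * sqrt (p x)) B"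
      proof (rule sum.cong[OF refl])
        fix x assume x: "x \<in> B"
        then have "p x > 0" "q x = sqrt (p x) / S" using a BA by (auto simp: B_def)
        moreover have "p x = sqrt (p x) * sqrt (p x)" using \<open>p x > 0\<close> by simp
        moreover have "sqrt (p x) > 0" using \<open>p x > 0\<close> by simp
        ultimately show "p x / q x = S * sqrt (p x)" using Spos
          by (metis divide_divide_eq_right mult.commute nonzero_mult_div_cancel_left less_irrefl)
      qed
      also have "\<dots> = S^2" by (simp add: sum_distrib_left[symmetric] SB power2_eq_square)
      finally show "sum (\<lambda>x. p x / q x) B = S^2" .
    qed
    show ?thesis using R ge eq S_def by simp
  qed
qed

lemma finite_trajs: "finite (trajs n :: ('s::finite \<times> 'a::finite) list set)"
proof -
  have "trajs n = {xs :: ('s \<times> 'a) list. set xs \<subseteq> UNIV \<and> length xs = n}" by (simp add: trajs_def)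
  then show ?thesis using finite_lists_length_eq[of "UNIV :: ('s \<times> 'a) set" n] by simp
qed

lemma sum_pair_UNIV:
  "(\<Sum>x\<in>(UNIV :: ('s::finite \<times> 'a::finite) set). f (fst x) (snd x)) = (\<Sum>s\<in>UNIV. \<Sum>a\<in>UNIV. f s a)"
  unfolding sum.cartesian_product UNIV_Times_UNIV by (simp add: case_prod_beta)

lemma trajs_Suc: "trajs (Suc n) = (\<lambda>(xs, x). xs @ [x]) ` (trajs n \<times> UNIV)"
proof safe
  fix ys assume "ys \<in> trajs (Suc n)"
  then have "length ys = Suc n" by (simp add: trajs_def)
  then have "ys = butlast ys @ [last ys]" "length (butlast ys) = n"
    by (auto intro: append_butlast_last_id[symmetric])
  then show "ys \<in> (\<lambda>(xs, x). xs @ [x]) ` (trajs n \<times> UNIV)"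
    by (intro image_eqI[of _ _ "(butlast ys, last ys)"]) (auto simp: trajs_def)
qed (auto simp: trajs_def)

lemma inj_snoc: "inj_on (\<lambda>(xs, x). xs @ [x]) A"
  by (auto simp: inj_on_def)

lemma traj_prob_snoc:
  assumes "length xs = Suc m"
  shows "traj_prob (Suc (Suc m)) p1 P pol (xs @ [x]) =
    traj_prob (Suc m) p1 P pol xs * (P (fst (xs ! m)) (snd (xs ! m)) (fst x) * pol (Suc m) (fst x) (snd x))"
proof -
  have a: "(\<Prod>t<Suc (Suc m). pol t (fst ((xs @ [x]) ! t)) (snd ((xs @ [x]) ! t)))
     = (\<Prod>t<Suc m. pol t (fst (xs ! t)) (snd (xs ! t))) * pol (Suc m) (fst x) (snd x)"
    using assms by (simp add: prod.lessThan_Suc nth_append del: prod.lessThan_Suc_shift)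
  have b: "(\<Prod>t<Suc m. P (fst ((xs @ [x]) ! t)) (snd ((xs @ [x]) ! t)) (fst ((xs @ [x]) ! Suc t)))
     = (\<Prod>t<m. P (fst (xs ! t)) (snd (xs ! t)) (fst (xs ! Suc t))) * P (fst (xs ! m)) (snd (xs ! m)) (fst x)"
    using assms by (simp add: prod.lessThan_Suc nth_append del: prod.lessThan_Suc_shift)
  have c: "(xs @ [x]) ! 0 = xs ! 0" using assms by (simp add: nth_append)
  show ?thesis unfolding traj_prob_def using a b c by (simp add: mult_ac)
qed

lemma traj_sum1:
  fixes p1 :: "'s::finite \<Rightarrow> real" and P :: "'s \<Rightarrow> 'a::finite \<Rightarrow> 's \<Rightarrow> real"
  assumes p1_sum: "(\<Sum>s\<in>UNIV. p1 s) = 1"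
    and P_sum: "\<forall>s a. (\<Sum>s'\<in>UNIV. P s a s') = 1"
    and pol: "pol \<in> policies T"
  shows "Suc m \<le> T \<Longrightarrow> (\<Sum>tau\<in>trajs (Suc m). traj_prob (Suc m) p1 P pol tau) = 1"
proof (induction m)
  case 0
  have "trajs (Suc 0) = (\<lambda>x. [x]) ` (UNIV :: ('s \<times> 'a) set)"
    by (auto simp: trajs_def length_Suc_conv)
  then have "(\<Sum>tau\<in>trajs (Suc 0). traj_prob (Suc 0) p1 P pol tau)
      = (\<Sum>x\<in>UNIV. traj_prob (Suc 0) p1 P pol [x])"
    by (simp add: sum.reindex inj_on_def)
  also have "\<dots> = (\<Sum>x\<in>(UNIV :: ('s \<times> 'a) set). p1 (fst x) * pol 0 (fst x) (snd x))"
    by (simp add: traj_prob_def)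
  also have "\<dots> = (\<Sum>s\<in>UNIV. p1 s * (\<Sum>a\<in>UNIV. pol 0 s a))"
    by (subst sum_pair_UNIV) (simp add: sum_distrib_left)
  also have "\<dots> = 1" using pol 0 p1_sum by (simp add: policies_def)
  finally show ?case .
next
  case (Suc m)
  then have IH: "(\<Sum>tau\<in>trajs (Suc m). traj_prob (Suc m) p1 P pol tau) = 1" by simp
  have inner: "(\<Sum>x\<in>(UNIV :: ('s \<times> 'a) set). P s0 a0 (fst x) * pol (Suc m) (fst x) (snd x)) = 1" for s0 a0
  proof -
    have "(\<Sum>x\<in>(UNIV :: ('s \<times> 'a) set). P s0 a0 (fst x) * pol (Suc m) (fst x) (snd x))
       = (\<Sum>s\<in>UNIV. P s0 a0 s * (\<Sum>a\<in>UNIV. pol (Suc m) s a))"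
      by (subst sum_pair_UNIV) (simp add: sum_distrib_left)
    also have "\<dots> = 1" using pol Suc.prems P_sum by (simp add: policies_def)
    finally show ?thesis .
  qed
  have "(\<Sum>tau\<in>trajs (Suc (Suc m)). traj_prob (Suc (Suc m)) p1 P pol tau)
     = (\<Sum>(xs,x)\<in>trajs (Suc m) \<times> UNIV. traj_prob (Suc (Suc m)) p1 P pol (xs @ [x]))"
    unfolding trajs_Suc[of "Suc m"] by (subst sum.reindex[OF inj_snoc]) (simp add: comp_def case_prod_unfold)
  also have "\<dots> = (\<Sum>xs\<in>trajs (Suc m). \<Sum>x\<in>UNIV. traj_prob (Suc (Suc m)) p1 P pol (xs @ [x]))"
    by (rule sum.cartesian_product[symmetric])
  also have "\<dots> = (\<Sum>xs\<in>trajs (Suc m). traj_prob (Suc m) p1 P pol xs *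
       (\<Sum>x\<in>UNIV. P (fst (xs ! m)) (snd (xs ! m)) (fst x) * pol (Suc m) (fst x) (snd x)))"
    by (rule sum.cong[OF refl]) (simp add: traj_prob_snoc trajs_def sum_distrib_left)
  also have "\<dots> = 1" using IH inner by simp
  finally show ?case .
qed

lemma traj_pos:
  fixes p1 :: "'s \<Rightarrow> real" and P :: "'s \<Rightarrow> 'a \<Rightarrow> 's \<Rightarrow> real"
  assumes p1n: "\<forall>s. 0 \<le> p1 s" and Pn: "\<forall>s a s'. 0 \<le> P s a s'"
    and poln: "\<forall>t<T. \<forall>s a. 0 \<le> pol t s a"
    and q: "traj_prob T p1 P pol tau > 0"
  shows "p1 (fst (tau ! 0)) > 0" "\<forall>t<T. pol t (fst (tau ! t)) (snd (tau ! t)) > 0"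
    "\<forall>t<T - 1. P (fst (tau ! t)) (snd (tau ! t)) (fst (tau ! Suc t)) > 0"
proof -
  have nz: "p1 (fst (tau ! 0)) \<noteq> 0 \<and> (\<forall>t<T. pol t (fst (tau ! t)) (snd (tau ! t)) \<noteq> 0)
    \<and> (\<forall>t<T - 1. P (fst (tau ! t)) (snd (tau ! t)) (fst (tau ! Suc t)) \<noteq> 0)"
  proof (intro conjI allI impI notI)
    show "p1 (fst (tau ! 0)) = 0 \<Longrightarrow> False" using q by (simp add: traj_prob_def)
  next
    fix t assume t: "t < T" and z: "pol t (fst (tau ! t)) (snd (tau ! t)) = 0"
    have "(\<Prod>t<T. pol t (fst (tau ! t)) (snd (tau ! t))) = 0"
      using t z by (intro prod_zero) auto
    then show False using q by (simp add: traj_prob_def del: prod_zero_iff)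
  next
    fix t assume t: "t < T - 1" and z: "P (fst (tau ! t)) (snd (tau ! t)) (fst (tau ! Suc t)) = 0"
    have "(\<Prod>t<T - 1. P (fst (tau ! t)) (snd (tau ! t)) (fst (tau ! Suc t))) = 0"
      using t z by (intro prod_zero) auto
    then show False using q by (simp add: traj_prob_def del: prod_zero_iff)
  qed
  have "p1 (fst (tau ! 0)) \<ge> 0" using p1n by blast
  then show "p1 (fst (tau ! 0)) > 0" using nz by linarith
  show "\<forall>t<T. pol t (fst (tau ! t)) (snd (tau ! t)) > 0"
  proof (intro allI impI)
    fix t assume t: "t < T"
    have "pol t (fst (tau ! t)) (snd (tau ! t)) \<ge> 0" using poln t by blast
    moreover have "pol t (fst (tau ! t)) (snd (tau ! t)) \<noteq> 0" using nz t by blast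
    ultimately show "pol t (fst (tau ! t)) (snd (tau ! t)) > 0" by linarith
  qed
  show "\<forall>t<T - 1. P (fst (tau ! t)) (snd (tau ! t)) (fst (tau ! Suc t)) > 0"
  proof (intro allI impI)
    fix t assume t: "t < T - 1"
    have "P (fst (tau ! t)) (snd (tau ! t)) (fst (tau ! Suc t)) \<ge> 0" using Pn by blast
    moreover have "P (fst (tau ! t)) (snd (tau ! t)) (fst (tau ! Suc t)) \<noteq> 0" using nz t by blast
    ultimately show "P (fst (tau ! t)) (snd (tau ! t)) (fst (tau ! Suc t)) > 0" by linarith
  qed
qed

lemma traj_nonneg:
  fixes p1 :: "'s \<Rightarrow> real" and P :: "'s \<Rightarrow> 'a \<Rightarrow> 's \<Rightarrow> real"
  assumes p1n: "\<forall>s. 0 \<le> p1 s" and Pn: "\<forall>s a s'. 0 \<le> P s a s'"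
    and poln: "\<forall>t<T. \<forall>s a. 0 \<le> pol t s a"
  shows "traj_prob T p1 P pol tau \<ge> 0"
  unfolding traj_prob_def using assms by (intro mult_nonneg_nonneg prod_nonneg) auto

theorem lemma1:
  fixes T :: nat
    and p1 :: "'s::finite \<Rightarrow> real"
    and P :: "'s \<Rightarrow> 'a::finite \<Rightarrow> 's \<Rightarrow> real"
    and p :: "('s \<times> 'a) list \<Rightarrow> real"
  assumes T: "1 \<le> T"
    and p1_nonneg: "\<forall>s. 0 \<le> p1 s" and p1_sum: "(\<Sum>s\<in>UNIV. p1 s) = 1"
    and P_nonneg: "\<forall>s a s'. 0 \<le> P s a s'" and P_sum: "\<forall>s a. (\<Sum>s'\<in>UNIV. P s a s') = 1"
    and p_nonneg: "\<forall>tau. 0 \<le> p tau"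
    and p_supp: "\<forall>tau. tau \<notin> trajs T \<longrightarrow> p tau = 0"
    and p_sum: "(\<Sum>tau\<in>trajs T. p tau) = 1"
    and circ: "\<exists>pic \<in> policies T. \<forall>tau\<in>trajs T.
                 traj_prob T p1 P pic tau = sqrt (p tau) / (\<Sum>tau'\<in>trajs T. sqrt (p tau'))"
  shows "\<exists>r :: nat \<Rightarrow> 's \<Rightarrow> 'a \<Rightarrow> ereal. (\<forall>t s a. r t s a \<noteq> \<infinity>) \<and>
           {pol \<in> policies T. \<forall>pol' \<in> policies T. regret T p1 P p pol \<le> regret T p1 P p pol'}
         = {pol \<in> policies T. \<forall>pol' \<in> policies T. maxent_obj T p1 P pol' r \<le> maxent_obj T p1 P pol r}"
proof -
  obtain pic where pic: "pic \<in> policies T"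
    and picq: "\<forall>tau\<in>trajs T. traj_prob T p1 P pic tau = sqrt (p tau) / (\<Sum>tau'\<in>trajs T. sqrt (p tau'))"
    using circ by blast
  define r :: "nat \<Rightarrow> 's \<Rightarrow> 'a \<Rightarrow> ereal" where
    "r t s a = (if 0 < pic t s a then ereal (ln (pic t s a)) else -\<infinity>)" for t s a
  have rinf: "\<forall>t s a. r t s a \<noteq> \<infinity>" by (simp add: r_def)
  define Tr where "Tr = (trajs T :: ('s \<times> 'a) list set)"
  define q where "q pol tau = traj_prob T p1 P pol tau" for pol tau
  have fin: "finite Tr" unfolding Tr_def by (rule finite_trajs)
  have poln: "\<forall>t<T. \<forall>s a. 0 \<le> pol t s a" if "pol \<in> policies T" for pol
    using that by (simp add: policies_def)
  have qnn: "\<forall>tau\<in>Tr. 0 \<le> q pol tau" if "pol \<in> policies T" for pol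
    unfolding q_def using traj_nonneg[OF p1_nonneg P_nonneg poln[OF that]] by blast
  have qsum: "sum (q pol) Tr = 1" if "pol \<in> policies T" for pol
  proof -
    have "Suc (T - 1) = T" using T by simp
    then show ?thesis using traj_sum1[OF p1_sum P_sum that, of "T - 1"] unfolding q_def Tr_def by simp
  qed
  have ptr: "\<forall>x\<in>Tr. 0 \<le> p x" using p_nonneg by simp
  have psum: "sum p Tr = 1" using p_sum by (simp add: Tr_def)
  have picS: "\<forall>tau\<in>Tr. q pic tau = sqrt (p tau) / sum (\<lambda>x. sqrt (p x)) Tr"
    using picq unfolding q_def Tr_def by simp
  define S2 where "S2 = (sum (\<lambda>x. sqrt (p x)) Tr)^2"
  have Rdef: "regret T p1 P p pol = sum (\<lambda>x. if q pol x = 0 then \<infinity> else ereal (p x / q pol x)) {x\<in>Tr. 0 < p x}" for pol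
    unfolding regret_def q_def Tr_def by simp
  have Rge: "ereal S2 \<le> regret T p1 P p pol" if "pol \<in> policies T" for pol
    using regret_abs[OF fin qnn[OF that] ptr qsum[OF that] psum] Rdef S2_def by simp
  have Req: "regret T p1 P p pol = ereal S2 \<longleftrightarrow> (\<forall>tau\<in>Tr. q pol tau = q pic tau)" if "pol \<in> policies T" for pol
    using regret_abs[OF fin qnn[OF that] ptr qsum[OF that] psum] Rdef S2_def picS by simp
  have Jdef: "maxent_obj T p1 P pol r = (\<Sum>tau\<in>Tr. if q pol tau = 0 then 0 else if q pic tau = 0 then -\<infinity>
      else ereal (q pol tau * ln (q pic tau / q pol tau)))" if pol: "pol \<in> policies T" for pol
  proof -
    have "maxent_obj T p1 P pol r = (\<Sum>tau\<in>Tr. ereal (q pol tau) * (\<Sum>t<T. r t (fst (tau ! t)) (snd (tau ! t)))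
       + ereal (q pol tau * (- (\<Sum>t<T. ln (pol t (fst (tau ! t)) (snd (tau ! t)))))))"
      unfolding maxent_obj_def cond_entropy_def q_def Tr_def
      by (simp add: sum.distrib sum_ereal[symmetric] del: sum_ereal)
    also have "\<dots> = (\<Sum>tau\<in>Tr. if q pol tau = 0 then 0 else if q pic tau = 0 then -\<infinity>
      else ereal (q pol tau * ln (q pic tau / q pol tau)))"
    proof (rule sum.cong[OF refl])
      fix tau assume tau: "tau \<in> Tr"
      show "ereal (q pol tau) * (\<Sum>t<T. r t (fst (tau ! t)) (snd (tau ! t)))
       + ereal (q pol tau * (- (\<Sum>t<T. ln (pol t (fst (tau ! t)) (snd (tau ! t)))))) =
        (if q pol tau = 0 then 0 else if q pic tau = 0 then -\<infinity>
      else ereal (q pol tau * ln (q pic tau / q pol tau)))"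
      proof (cases "q pol tau = 0")
        case True then show ?thesis by simp
      next
        case qn: False
        have qp: "q pol tau > 0" using qn qnn[OF pol] tau by force
        note pos = traj_pos[OF p1_nonneg P_nonneg poln[OF pol] qp[unfolded q_def]]
        show ?thesis
        proof (cases "\<forall>t<T. 0 < pic t (fst (tau ! t)) (snd (tau ! t))")
          case True
          have rs: "(\<Sum>t<T. r t (fst (tau ! t)) (snd (tau ! t))) = ereal (\<Sum>t<T. ln (pic t (fst (tau ! t)) (snd (tau ! t))))"
            using True by (simp add: r_def)
          define A where "A = p1 (fst (tau ! 0)) * (\<Prod>t<T - 1. P (fst (tau ! t)) (snd (tau ! t)) (fst (tau ! Suc t)))"
          have Ap: "A > 0" unfolding A_def using pos by (intro mult_pos_pos prod_pos) auto
          have qa: "q pol tau = A * (\<Prod>t<T. pol t (fst (tau ! t)) (snd (tau ! t)))"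
            unfolding q_def traj_prob_def A_def by (simp add: mult_ac)
          have ca: "q pic tau = A * (\<Prod>t<T. pic t (fst (tau ! t)) (snd (tau ! t)))"
            unfolding q_def traj_prob_def A_def by (simp add: mult_ac)
          have pp1: "(\<Prod>t<T. pol t (fst (tau ! t)) (snd (tau ! t))) > 0" using pos by (intro prod_pos) auto
          have pp2: "(\<Prod>t<T. pic t (fst (tau ! t)) (snd (tau ! t))) > 0" using True by (intro prod_pos) auto
          have cp: "q pic tau \<noteq> 0" using ca Ap pp2 by (metis mult_pos_pos less_irrefl)
          have "ln (q pic tau / q pol tau) = ln (\<Prod>t<T. pic t (fst (tau ! t)) (snd (tau ! t))) - ln (\<Prod>t<T. pol t (fst (tau ! t)) (snd (tau ! t)))"
          proof -
            define X where "X = (\<Prod>t<T. pic t (fst (tau ! t)) (snd (tau ! t)))"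
            define Y where "Y = (\<Prod>t<T. pol t (fst (tau ! t)) (snd (tau ! t)))"
            have "q pic tau / q pol tau = X / Y" using qa ca Ap unfolding X_def[symmetric] Y_def[symmetric] by simp
            moreover have "X > 0" "Y > 0" using pp1 pp2 X_def Y_def by auto
            ultimately show ?thesis unfolding X_def[symmetric] Y_def[symmetric] by (simp add: ln_div)
          qed
          also have "\<dots> = (\<Sum>t<T. ln (pic t (fst (tau ! t)) (snd (tau ! t)))) - (\<Sum>t<T. ln (pol t (fst (tau ! t)) (snd (tau ! t))))"
          proof -
            have "ln (\<Prod>t<T. pic t (fst (tau ! t)) (snd (tau ! t))) = (\<Sum>t<T. ln (pic t (fst (tau ! t)) (snd (tau ! t))))"
              by (rule ln_prod) (use True in auto)
            moreover have "ln (\<Prod>t<T. pol t (fst (tau ! t)) (snd (tau ! t))) = (\<Sum>t<T. ln (pol t (fst (tau ! t)) (snd (tau ! t))))"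
              by (rule ln_prod) (use pos in auto)
            ultimately show ?thesis by simp
          qed
          finally have l: "ln (q pic tau / q pol tau) = \<dots>" .
          show ?thesis using qn cp rs by (simp add: l right_diff_distrib)
        next
          case False
          then obtain t0 where t0: "t0 < T" "\<not> 0 < pic t0 (fst (tau ! t0)) (snd (tau ! t0))" by blast
          have "pic t0 (fst (tau ! t0)) (snd (tau ! t0)) = 0" 
          proof -
            have "0 \<le> pic t0 (fst (tau ! t0)) (snd (tau ! t0))" using poln[OF pic] t0 by blast
            then show ?thesis using t0(2) by linarith
          qed
          then have c0: "q pic tau = 0" unfolding q_def traj_prob_def using t0 by auto
          have "(\<Sum>t<T. r t (fst (tau ! t)) (snd (tau ! t))) = -\<infinity>"
            by (rule sum_minf[of _ t0]) (use t0 in \<open>auto simp: r_def\<close>)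
          then show ?thesis using qn qp c0 by simp
        qed
      qed
    qed
    finally show ?thesis .
  qed
  have Jle: "maxent_obj T p1 P pol r \<le> 0" and Jeq: "maxent_obj T p1 P pol r = 0 \<longleftrightarrow> (\<forall>tau\<in>Tr. q pol tau = q pic tau)"
    if "pol \<in> policies T" for pol
    using gibbs[OF fin qnn[OF that] qnn[OF pic] qsum[OF that] qsum[OF pic]] Jdef[OF that] by simp_all
  have Rpic: "regret T p1 P p pic = ereal S2" using Req[OF pic] by simp
  have Jpic: "maxent_obj T p1 P pic r = 0" using Jeq[OF pic] by simp
  have L: "{pol \<in> policies T. \<forall>pol' \<in> policies T. regret T p1 P p pol \<le> regret T p1 P p pol'}
      = {pol \<in> policies T. \<forall>tau\<in>Tr. q pol tau = q pic tau}"
  proof safe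
    fix pol assume pol: "pol \<in> policies T" and m: "\<forall>pol' \<in> policies T. regret T p1 P p pol \<le> regret T p1 P p pol'"
    then have "regret T p1 P p pol \<le> ereal S2" using pic Rpic by metis
    then have "regret T p1 P p pol = ereal S2" using Rge[OF pol] by simp
    then show "\<And>tau. tau \<in> Tr \<Longrightarrow> q pol tau = q pic tau" using Req[OF pol] by blast
  next
    fix pol pol' :: "nat \<Rightarrow> 's \<Rightarrow> 'a \<Rightarrow> real" assume pol: "pol \<in> policies T" and "\<forall>tau\<in>Tr. q pol tau = q pic tau" and "pol' \<in> policies T"
    then show "regret T p1 P p pol \<le> regret T p1 P p pol'" using Req[OF pol] Rge by simp
  qed
  have R: "{pol \<in> policies T. \<forall>pol' \<in> policies T. maxent_obj T p1 P pol' r \<le> maxent_obj T p1 P pol r}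
      = {pol \<in> policies T. \<forall>tau\<in>Tr. q pol tau = q pic tau}"
  proof safe
    fix pol assume pol: "pol \<in> policies T" and m: "\<forall>pol' \<in> policies T. maxent_obj T p1 P pol' r \<le> maxent_obj T p1 P pol r"
    then have "0 \<le> maxent_obj T p1 P pol r" using pic Jpic by metis
    then have "maxent_obj T p1 P pol r = 0" using Jle[OF pol] by simp
    then show "\<And>tau. tau \<in> Tr \<Longrightarrow> q pol tau = q pic tau" using Jeq[OF pol] by blast
  next
    fix pol pol' :: "nat \<Rightarrow> 's \<Rightarrow> 'a \<Rightarrow> real" assume pol: "pol \<in> policies T" and "\<forall>tau\<in>Tr. q pol tau = q pic tau" and "pol' \<in> policies T"
    then show "maxent_obj T p1 P pol' r \<le> maxent_obj T p1 P pol r" using Jeq[OF pol] Jle by simp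
  qed
  show ?thesis using rinf L R by blast
qed

end
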